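(* Let $c,o\in\{1,\dots,N\}$ and define the polynomial $$h(s)=e_o^{T}\,\operatorname{adj}(sI+L)\,e_c=\sum_{i=0}^{N-1}h_i s^i,$$ that is, the $(o,c)$ entry of the adjugate of $sI+L$. Then for every $i=0,\dots,N-1$, $$h_i=\vartheta\big(\mathcal F_{N-i-1}^{c\to o}\big).$$
   Context: Let $\mathcal G$ be a weighted directed graph on the vertex set $\{1,\dots,N\}$ with adjacency matrix $A=[a_{ij}]$, where $a_{ij}>0$ if there is an arc from $j$ to $i$ and $a_{ij}=0$ otherwise (no self-loops). The weight of that arc is $a_{ij}$. The Laplacian is $L=D-A$ with $D=\mathrm{diag}(\sum_j a_{ij})$. The vector $e_i$ is the $i$-th canonical basis vector, and $I$ is the identity matrix. A diverging (out-)tree is a set of arcs on a vertex subset that has a root vertex of in-degree $0$, has every other vertex of in-degree exactly $1$, and has a directed path from the root to every vertex of the subset. A spanning diverging forest is a set of arcs whose diverging trees partition all $N$ vertices; isolated vertices are trivial trees. The weight of a forest is the product of its arc weights. $\mathcal F_k^{u\to w}$ is the set of all spanning diverging forests with exactly $k$ arcs in which $u$ is the root of a tree containing $w$. The quantity $\vartheta(\mathcal F_k^{u\to w})$ is the sum of the weights of its members; it is $0$ if the set is empty. *)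

theory Defs
  imports "Jordan_Normal_Form.Determinant" "HOL-Library.Disjoint_Sets"
          "HOL-Computational_Algebra.Polynomial"
begin

text \<open>Vertices are 0,...,N-1 (the paper's 1,...,N shifted by one).
  A is the weighted adjacency matrix: A(i,j) > 0 iff there is an arc from j to i.
  An arc from j to i is represented as the pair (j,i) (tail, head).\<close>

definition arcs :: "real mat \<Rightarrow> (nat \<times> nat) set" where
  "arcs A = {(j,i). i < dim_row A \<and> j < dim_col A \<and> A $$ (i,j) > 0}"

definition degree_mat :: "real mat \<Rightarrow> real mat" where
  "degree_mat A = mat (dim_row A) (dim_row A)
     (\<lambda>(i,j). if i = j then (\<Sum>k<dim_col A. A $$ (i,k)) else 0)"

definition laplacian :: "real mat \<Rightarrow> real mat" where
  "laplacian A = degree_mat A - A"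

definition sI_plus :: "real mat \<Rightarrow> real poly mat" where
  "sI_plus L = [:0, 1:] \<cdot>\<^sub>m 1\<^sub>m (dim_row L) + map_mat (\<lambda>x. [:x:]) L"

definition diverging_tree :: "(nat \<times> nat) set \<Rightarrow> nat set \<Rightarrow> nat \<Rightarrow> bool" where
  "diverging_tree T S r \<longleftrightarrow>
     r \<in> S \<and> T \<subseteq> S \<times> S \<and>
     (\<forall>v\<in>S. card {u. (u,v) \<in> T} = (if v = r then 0 else 1)) \<and>
     (\<forall>v\<in>S. (r,v) \<in> T\<^sup>*)"

definition forest_with_parts :: "real mat \<Rightarrow> (nat \<times> nat) set \<Rightarrow> nat set set \<Rightarrow> bool" where
  "forest_with_parts A F P \<longleftrightarrow>
     F \<subseteq> arcs A \<and> partition_on {0..<dim_row A} P \<and>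
     F \<subseteq> (\<Union>S\<in>P. S \<times> S) \<and>
     (\<forall>S\<in>P. \<exists>r. diverging_tree (F \<inter> (S \<times> S)) S r)"

definition spanning_diverging_forest :: "real mat \<Rightarrow> (nat \<times> nat) set \<Rightarrow> bool" where
  "spanning_diverging_forest A F \<longleftrightarrow> (\<exists>P. forest_with_parts A F P)"

definition forests_root :: "real mat \<Rightarrow> nat \<Rightarrow> nat \<Rightarrow> nat \<Rightarrow> (nat \<times> nat) set set" where
  "forests_root A k u w = {F. card F = k \<and>
     (\<exists>P. forest_with_parts A F P \<and>
        (\<exists>S\<in>P. u \<in> S \<and> w \<in> S \<and> diverging_tree (F \<inter> (S \<times> S)) S u))}"

definition forest_weight :: "real mat \<Rightarrow> (nat \<times> nat) set \<Rightarrow> real" where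
  "forest_weight A F = (\<Prod>(j,i)\<in>F. A $$ (i,j))"

definition theta :: "real mat \<Rightarrow> (nat \<times> nat) set set \<Rightarrow> real" where
  "theta A \<F> = (\<Sum>F\<in>\<F>. forest_weight A F)"

end

theory Submission
  imports Defs
begin

definition Em :: "nat \<Rightarrow> nat \<Rightarrow> (nat \<Rightarrow> nat option) \<Rightarrow> nat \<Rightarrow> real mat" where
 "Em n c f x = mat n n (\<lambda>(i,k). if i = c then (if k = x then 1 else 0)
     else (if i = k then 1 else 0) - (if f i = Some k then 1 else 0))"

definition relf :: "nat \<Rightarrow> (nat \<Rightarrow> nat option) \<Rightarrow> (nat \<times> nat) set" where
 "relf n f = {(j,i). i < n \<and> f i = Some j}"

lemma Em_carrier[simp]: "Em n c f x \<in> carrier_mat n n"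
  unfolding Em_def by auto

lemma Em_dims[simp]: "dim_row (Em n c f x) = n" "dim_col (Em n c f x) = n"
  unfolding Em_def by auto

lemma Em_W1:
  assumes "c < n" "x < n" "x \<noteq> c" "f x = Some y" "y < n"
  shows "det (Em n c f x) = det (Em n c f y)"
proof -
  have "Em n c f x = addrow 1 c x (Em n c f y)"
    by (rule eq_matI) (use assms in \<open>auto simp: Em_def\<close>)
  then show ?thesis using det_addrow[of x n c "Em n c f y" 1] assms by simp
qed

lemma Em_W2:
  assumes "c < n" "x < n" "x \<noteq> c" "f x = None"
  shows "det (Em n c f x) = 0"
proof (rule det_identical_rows[of _ n c x])
  show "row (Em n c f x) c = row (Em n c f x) x"
    by (rule eq_vecI) (use assms in \<open>auto simp: Em_def\<close>)
qed (use assms in auto)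

lemma det_row_lin:
  fixes A B C :: "'a::comm_ring_1 mat"
  assumes "A \<in> carrier_mat n n" "B \<in> carrier_mat n n" "C \<in> carrier_mat n n" "k < n"
    and "\<And>i j. i < n \<Longrightarrow> j < n \<Longrightarrow> i \<noteq> k \<Longrightarrow> B $$ (i,j) = A $$ (i,j) \<and> C $$ (i,j) = A $$ (i,j)"
    and "\<And>j. j < n \<Longrightarrow> A $$ (k,j) = B $$ (k,j) + C $$ (k,j)"
  shows "det A = det B + det C"
proof -
  have "signof p * (\<Prod>i = 0..<n. A $$ (i, p i)) =
        signof p * (\<Prod>i = 0..<n. B $$ (i, p i)) + signof p * (\<Prod>i = 0..<n. C $$ (i, p i))"
    if p: "p permutes {0..<n}" for p
  proof -
    have pk: "p k < n" using p assms(4) by (meson atLeastLessThan_iff permutes_in_image zero_le)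
    have fin: "finite {0..<n}" and k: "k \<in> {0..<n}" using assms(4) by auto
    have pi: "\<And>i. i \<in> {0..<n} - {k} \<Longrightarrow> p i < n"
      using p by (meson Diff_iff atLeastLessThan_iff permutes_in_image)
    have eB: "(\<Prod>i \<in> {0..<n} - {k}. B $$ (i, p i)) = (\<Prod>i \<in> {0..<n} - {k}. A $$ (i, p i))"
      by (rule prod.cong) (use assms(5) pi in auto)
    have eC: "(\<Prod>i \<in> {0..<n} - {k}. C $$ (i, p i)) = (\<Prod>i \<in> {0..<n} - {k}. A $$ (i, p i))"
      by (rule prod.cong) (use assms(5) pi in auto)
    show ?thesis
      unfolding prod.remove[OF fin k] eB eC assms(6)[OF pk] by (simp add: algebra_simps)
  qed
  then show ?thesis
    unfolding det_def'[OF assms(1)] det_def'[OF assms(2)] det_def'[OF assms(3)]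
    by (simp add: sum.distrib[symmetric])
qed

lemma relf_finite: "finite (relf n f)"
proof -
  have "relf n f \<subseteq> (\<lambda>i. (the (f i), i)) ` {0..<n}" unfolding relf_def by force
  then show ?thesis by (rule finite_subset) auto
qed

lemma relf_last: "(c, x) \<in> (relf n f)\<^sup>* \<Longrightarrow> x \<noteq> c \<Longrightarrow> \<exists>y. f x = Some y \<and> (c,y) \<in> (relf n f)\<^sup>* \<and> x < n"
  by (erule rtranclE) (auto simp: relf_def)

lemma Em_walk:
  assumes "c < n" "f c = None" "\<And>i j. i < n \<Longrightarrow> f i = Some j \<Longrightarrow> j < n"
    and ac: "acyclic (relf n f)"
  shows "x < n \<Longrightarrow> det (Em n c f x) = (if (c,x) \<in> (relf n f)\<^sup>* then det (Em n c f c) else 0)"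
proof (induction x rule: wf_induct[OF finite_acyclic_wf[OF relf_finite ac]])
  case (1 x)
  show ?case
  proof (cases "x = c")
    case True then show ?thesis by simp
  next
    case False
    show ?thesis
    proof (cases "f x")
      case None
      have "(c,x) \<notin> (relf n f)\<^sup>*" using relf_last[of c x n f] False None by auto
      then show ?thesis using Em_W2[of c n x f, OF assms(1) 1(2) False None] by simp
    next
      case (Some y)
      have y: "y < n" using assms(3) 1(2) Some by auto
      have yx: "(y,x) \<in> relf n f" using 1(2) Some by (auto simp: relf_def)
      have iff: "(c,x) \<in> (relf n f)\<^sup>* \<longleftrightarrow> (c,y) \<in> (relf n f)\<^sup>*"
        using relf_last[of c x n f] False Some yx by (auto intro: rtrancl_into_rtrancl)
      show ?thesis using Em_W1[of c n x f y, OF assms(1) 1(2) False Some y] 1(1)[rule_format, OF yx y] iff by simp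
    qed
  qed
qed

lemma Em_tri:
  assumes "card {i\<in>{0..<n}. f i \<noteq> None} = m" "c < n" "f c = None"
    "\<And>i j. i < n \<Longrightarrow> f i = Some j \<Longrightarrow> j < n" "acyclic (relf n f)"
  shows "det (Em n c f c) = 1"
  using assms
proof (induction m arbitrary: f)
  case 0
  then have "\<forall>i<n. f i = None" by auto
  then have "Em n c f c = 1\<^sub>m n" by (intro eq_matI) (auto simp: Em_def)
  then show ?case by simp
next
  case (Suc m)
  obtain v where v: "v < n" "f v \<noteq> None" using Suc(2)
    by (metis (mono_tags, lifting) Collect_empty_eq atLeastLessThan_iff card.empty nat.distinct(1))
  then obtain y where y: "f v = Some y" by auto
  have yn: "y < n" using Suc(5) v y by auto
  have vc: "v \<noteq> c" using Suc(4) v by auto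
  define g where "g = f(v := None)"
  have "{i\<in>{0..<n}. g i \<noteq> None} = {i\<in>{0..<n}. f i \<noteq> None} - {v}" by (auto simp: g_def)
  then have cg: "card {i\<in>{0..<n}. g i \<noteq> None} = m" using Suc(2) v by (simp add: card_Diff_singleton)
  have sub: "relf n g \<subseteq> relf n f" by (auto simp: relf_def g_def)
  have acg: "acyclic (relf n g)" using acyclic_subset[OF Suc(6) sub] .
  have rg: "\<And>i j. i < n \<Longrightarrow> g i = Some j \<Longrightarrow> j < n" using Suc(5) by (auto simp: g_def split: if_splits)
  have IH: "det (Em n c g c) = 1"
    by (rule Suc.IH[OF cg Suc(3) _ rg acg]) (use Suc(4) in \<open>auto simp: g_def\<close>)
  have D0: "det (Em n v g y) = 0"
  proof -
    have "(v,y) \<notin> (relf n g)\<^sup>*"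
    proof
      assume "(v,y) \<in> (relf n g)\<^sup>*"
      then have "(v,y) \<in> (relf n f)\<^sup>*" using rtrancl_mono[OF sub] by auto
      moreover have "(y,v) \<in> relf n f" using v y by (auto simp: relf_def)
      ultimately have "(v,v) \<in> (relf n f)\<^sup>+" by (meson rtrancl_into_trancl1)
      then show False using Suc(6) unfolding acyclic_def by auto
    qed
    then show ?thesis using Em_walk[of v n g, OF v(1) _ rg acg yn] by (simp add: g_def)
  qed
  have "det (Em n c g c) = det (Em n c f c) + det (Em n v g y)"
    by (rule det_row_lin[of _ n _ _ v]) (use v vc y Suc(4) in \<open>auto simp: Em_def g_def\<close>)
  then show ?case using IH D0 by simp
qed

lemma Em_cyc:
  assumes "c < n" "f c = None" "\<And>i j. i < n \<Longrightarrow> f i = Some j \<Longrightarrow> j < n"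
    and nac: "\<not> acyclic (relf n f)"
  shows "det (Em n c f x) = 0"
proof -
  let ?R = "relf n f"
  define Z where "Z = {u. (u,u) \<in> ?R\<^sup>+}"
  define p where "p = (\<lambda>u. the (f u))"
  have Zpar: "u < n \<and> f u = Some (p u) \<and> (u, p u) \<in> ?R\<^sup>*" if "u \<in> Z" for u
  proof -
    from that have "(u,u) \<in> ?R\<^sup>+" by (simp add: Z_def)
    then obtain z where "(u,z) \<in> ?R\<^sup>*" "(z,u) \<in> ?R" by (meson tranclD2)
    then show ?thesis by (auto simp: relf_def p_def)
  qed
  have pZ: "p u \<in> Z" if "u \<in> Z" for u
  proof -
    have "(p u, u) \<in> ?R" using Zpar[OF that] by (auto simp: relf_def)
    then have "(p u, p u) \<in> ?R\<^sup>+" using Zpar[OF that] by (meson rtrancl_into_trancl2)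
    then show ?thesis by (simp add: Z_def)
  qed
  have Zsurj: "\<exists>u\<in>Z. p u = z" if "z \<in> Z" for z
  proof -
    from that have "(z,z) \<in> ?R\<^sup>+" by (simp add: Z_def)
    then obtain u where u: "(z,u) \<in> ?R" "(u,z) \<in> ?R\<^sup>*" by (meson tranclD)
    have "(u,u) \<in> ?R\<^sup>+" using u by (meson rtrancl_into_trancl1)
    then have "u \<in> Z" by (simp add: Z_def)
    moreover have "p u = z" using u(1) by (auto simp: relf_def p_def)
    ultimately show ?thesis by auto
  qed
  have Zsub: "Z \<subseteq> {0..<n}" using Zpar by auto
  have finZ: "finite Z" using Zsub finite_subset by blast
  have imgZ: "p ` Z = Z" using pZ Zsurj by blast
  have injZ: "inj_on p Z" using eq_card_imp_inj_on[OF finZ, of p] imgZ by simp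
  have bijZ: "bij_betw p Z Z" using injZ imgZ by (simp add: bij_betw_def)
  have cZ: "c \<notin> Z" using Zpar assms(2) by auto
  obtain z0 where z0: "z0 \<in> Z" using nac unfolding acyclic_def Z_def by auto
  let ?E = "Em n c f x"
  define w where "w = vec n (\<lambda>i. if i \<in> Z then (1::real) else 0)"
  have wc: "w \<in> carrier_vec n" by (simp add: w_def)
  have w0: "w \<noteq> 0\<^sub>v n"
  proof
    assume "w = 0\<^sub>v n"
    then have "w $ z0 = 0" using Zsub z0 by auto
    then show False using Zsub z0 by (auto simp: w_def)
  qed
  have kern: "?E\<^sup>T *\<^sub>v w = 0\<^sub>v n"
  proof (rule eq_vecI)
    fix k assume "k < dim_vec (0\<^sub>v n :: real vec)"
    then have k: "k < n" by simp
    have "(?E\<^sup>T *\<^sub>v w) $ k = (\<Sum>i = 0..<n. ?E $$ (i,k) * w $ i)"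
      using k by (simp add: scalar_prod_def w_def index_mult_mat_vec)
    also have "\<dots> = (\<Sum>i \<in> Z. ?E $$ (i,k))"
      by (rule sum.mono_neutral_cong_right) (use Zsub k in \<open>auto simp: w_def\<close>)
    also have "\<dots> = (\<Sum>i \<in> Z. (if i = k then 1 else 0) - (if p i = k then 1 else 0))"
      by (rule sum.cong) (use Zpar cZ k in \<open>auto simp: Em_def\<close>)
    also have "\<dots> = (\<Sum>i \<in> Z. (if i = k then 1 else 0)) - (\<Sum>i \<in> Z. (if p i = k then 1 else 0))"
      by (simp add: sum_subtractf)
    also have "(\<Sum>i \<in> Z. (if p i = k then 1 else 0)) = (\<Sum>i \<in> Z. (if i = k then (1::real) else 0))"
      using sum.reindex_bij_betw[OF bijZ, of "\<lambda>i. if i = k then (1::real) else 0"] by simp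
    finally show "(?E\<^sup>T *\<^sub>v w) $ k = 0\<^sub>v n $ k" using k by simp
  qed auto
  have "det (?E\<^sup>T) = 0"
    using det_0_iff_vec_prod_zero_field[of "?E\<^sup>T" n] wc w0 kern by auto
  then show ?thesis using det_transpose[of ?E n] by simp
qed

lemma Em_val:
  assumes "c < n" "f c = None" "\<And>i j. i < n \<Longrightarrow> f i = Some j \<Longrightarrow> j < n" "ob < n"
  shows "det (Em n c f ob) = (if acyclic (relf n f) \<and> (c,ob) \<in> (relf n f)\<^sup>* then 1 else 0)"
proof (cases "acyclic (relf n f)")
  case True
  show ?thesis using Em_walk[OF assms(1-3) True assms(4)] Em_tri[OF refl assms(1-3) True] True by simp
next
  case False
  then show ?thesis using Em_cyc[OF assms(1-3) False] by simp
qed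

lemma det_multilin:
  fixes M :: "'a::comm_ring_1 mat"
  assumes M: "M \<in> carrier_mat n n" and fin: "\<And>i. i < n \<Longrightarrow> finite (X i)"
    and ent: "\<And>i k. i < n \<Longrightarrow> k < n \<Longrightarrow> M $$ (i,k) = (\<Sum>x\<in>X i. w i x * V i x k)"
  shows "det M = (\<Sum>f\<in>PiE {0..<n} X. (\<Prod>i=0..<n. w i (f i)) * det (mat n n (\<lambda>(i,k). V i (f i) k)))"
proof -
  let ?P = "{p. p permutes {0..<n}}"
  have pin: "\<And>p i. p \<in> ?P \<Longrightarrow> i \<in> {0..<n} \<Longrightarrow> p i < n"
    by (simp add: permutes_in_image)
  have "det M = (\<Sum>p\<in>?P. signof p * (\<Prod>i=0..<n. \<Sum>x\<in>X i. w i x * V i x (p i)))"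
    unfolding det_def'[OF M] by (intro sum.cong refl arg_cong2[where f="(*)"] prod.cong) (auto simp: ent pin)
  also have "\<dots> = (\<Sum>p\<in>?P. signof p * (\<Sum>f\<in>PiE {0..<n} X. \<Prod>i=0..<n. w i (f i) * V i (f i) (p i)))"
    by (subst prod_sum_PiE) (auto simp: fin)
  also have "\<dots> = (\<Sum>p\<in>?P. \<Sum>f\<in>PiE {0..<n} X. (\<Prod>i=0..<n. w i (f i)) * (signof p * (\<Prod>i=0..<n. V i (f i) (p i))))"
    by (simp add: sum_distrib_left prod.distrib algebra_simps)
  also have "\<dots> = (\<Sum>f\<in>PiE {0..<n} X. \<Sum>p\<in>?P. (\<Prod>i=0..<n. w i (f i)) * (signof p * (\<Prod>i=0..<n. V i (f i) (p i))))"
    by (rule sum.swap)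
  also have "\<dots> = (\<Sum>f\<in>PiE {0..<n} X. (\<Prod>i=0..<n. w i (f i)) * det (mat n n (\<lambda>(i,k). V i (f i) k)))"
  proof (rule sum.cong[OF refl])
    fix f
    have "det (mat n n (\<lambda>(i,k). V i (f i) k)) = (\<Sum>p\<in>?P. signof p * (\<Prod>i=0..<n. V i (f i) (p i)))"
      unfolding det_def'[OF mat_carrier] by (intro sum.cong refl arg_cong2[where f="(*)"] prod.cong) (auto simp: pin)
    then show "(\<Sum>p\<in>?P. (\<Prod>i=0..<n. w i (f i)) * (signof p * (\<Prod>i=0..<n. V i (f i) (p i)))) =
       (\<Prod>i=0..<n. w i (f i)) * det (mat n n (\<lambda>(i,k). V i (f i) k))"
      by (simp add: sum_distrib_left)
  qed
  finally show ?thesis .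
qed

lemma cofactor_replace:
  fixes M :: "'a::comm_ring_1 mat"
  assumes M: "M \<in> carrier_mat n n" and c: "c < n" and o: "ob < n"
  shows "cofactor M c ob = det (mat n n (\<lambda>(i,k). if i = c then (if k = ob then 1 else 0) else M $$ (i,k)))"
proof -
  define M' where "M' = mat n n (\<lambda>(i,k). if i = c then (if k = ob then 1 else 0) else M $$ (i,k))"
  have M': "M' \<in> carrier_mat n n" by (simp add: M'_def)
  have "det M' = (\<Sum>j<n. M' $$ (c,j) * cofactor M' c j)" by (rule laplace_expansion_row[OF M' c])
  also have "\<dots> = (\<Sum>j<n. if j = ob then cofactor M' c j else 0)"
    by (rule sum.cong) (auto simp: M'_def c)
  also have "\<dots> = cofactor M' c ob" using o by simp
  also have "mat_delete M' c ob = mat_delete M c ob"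
    using M by (intro eq_matI) (auto simp: mat_delete_def M'_def)
  then have "cofactor M' c ob = cofactor M c ob" by (simp add: cofactor_def)
  finally show ?thesis by (simp add: M'_def)
qed

lemma cp_hom: "comm_ring_hom (\<lambda>x::'a::comm_ring_1. [:x:])"
  by unfold_locales (simp_all add: one_pCons)

lemma prod_monom: "finite I \<Longrightarrow> (\<Prod>i\<in>I. monom (a i) (d i)) = monom (\<Prod>i\<in>I. a i) (\<Sum>i\<in>I. d i)"
  by (induction I rule: finite_induct) (simp_all add: mult_monom monom_0 one_pCons)

definition Xs :: "nat \<Rightarrow> nat \<Rightarrow> nat \<Rightarrow> nat option set" where
  "Xs N c i = (if i = c then {None} else insert None (Some ` ({0..<N} - {i})))"
definition wr :: "real mat \<Rightarrow> nat \<Rightarrow> nat option \<Rightarrow> real" where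
  "wr A i x = (case x of None \<Rightarrow> 1 | Some j \<Rightarrow> A $$ (i,j))"
definition wd :: "nat \<Rightarrow> nat \<Rightarrow> nat option \<Rightarrow> nat" where
  "wd c i x = (if x = None \<and> i \<noteq> c then 1 else 0)"
definition Vr :: "nat \<Rightarrow> nat \<Rightarrow> nat \<Rightarrow> nat option \<Rightarrow> nat \<Rightarrow> real" where
  "Vr c ob i x k = (if i = c then (if k = ob then 1 else 0)
     else (if i = k then 1 else 0) - (if x = Some k then 1 else 0))"

definition goodf :: "real mat \<Rightarrow> nat \<Rightarrow> nat \<Rightarrow> nat \<Rightarrow> nat \<Rightarrow> (nat \<Rightarrow> nat option) set" where
  "goodf A N c ob k = {f \<in> PiE {0..<N} (Xs N c). card (relf N f) = k \<and> acyclic (relf N f) \<and>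
     (c,ob) \<in> (relf N f)\<^sup>* \<and> (\<forall>i<N. \<forall>j. f i = Some j \<longrightarrow> A $$ (i,j) > 0)}"


definition nopar :: "(nat \<times> nat) set \<Rightarrow> nat \<Rightarrow> bool" where
  "nopar F x \<longleftrightarrow> (\<forall>u. (u,x) \<notin> F)"

definition uniqpar :: "(nat \<times> nat) set \<Rightarrow> bool" where
  "uniqpar F \<longleftrightarrow> (\<forall>u u' v. (u,v) \<in> F \<longrightarrow> (u',v) \<in> F \<longrightarrow> u = u')"

lemma uniq_root:
  assumes up: "uniqpar F" and r1: "(r1,v) \<in> F\<^sup>*" and n1: "nopar F r1"
  shows "(r2,v) \<in> F\<^sup>* \<Longrightarrow> nopar F r2 \<Longrightarrow> r2 = r1"
  using r1
proof (induction arbitrary: r2 rule: rtrancl_induct)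
  case base
  from base(1) show ?case
    by (rule rtranclE) (use n1 in \<open>auto simp: nopar_def\<close>)
next
  case (step y z)
  from step(4) show ?case
  proof (rule rtranclE)
    assume "r2 = z" then show ?thesis using step(2,5) by (auto simp: nopar_def)
  next
    fix y' assume "(r2,y') \<in> F\<^sup>*" "(y',z) \<in> F"
    moreover have "y' = y" using up \<open>(y',z) \<in> F\<close> step(2) by (auto simp: uniqpar_def)
    ultimately show ?thesis using step(3) step(5) by auto
  qed
qed

lemma exists_root:
  assumes "finite F" "acyclic F"
  shows "\<exists>r. (r,x) \<in> F\<^sup>* \<and> nopar F r"
proof (induction x rule: wf_induct[OF finite_acyclic_wf[OF assms]])
  case (1 x)
  show ?case
  proof (cases "nopar F x")
    case True then show ?thesis by auto
  next
    case False
    then obtain u where u: "(u,x) \<in> F" by (auto simp: nopar_def)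
    then obtain r where "(r,u) \<in> F\<^sup>*" "nopar F r" using 1 by auto
    then show ?thesis using u by (meson rtrancl.rtrancl_into_rtrancl)
  qed
qed

lemma PiE_props0:
  assumes "f \<in> PiE {0..<N} (Xs N c)" "c < N"
  shows "f c = None" "\<And>i j. i < N \<Longrightarrow> f i = Some j \<Longrightarrow> j < N \<and> j \<noteq> i"
  using assms by (auto simp: PiE_def Pi_def Xs_def split: if_splits)

lemma comb_sub:
  assumes Ac: "A \<in> carrier_mat N N"
    and c: "c < N" and o: "ob < N"
    and f: "f \<in> goodf A N c ob k"
  shows "relf N f \<in> forests_root A k c ob"
proof -
  let ?R = "relf N f"
  have fPi: "f \<in> PiE {0..<N} (Xs N c)" and ck: "card ?R = k" and ac: "acyclic ?R"
    and co: "(c,ob) \<in> ?R\<^sup>*" and pos: "\<And>i j. i < N \<Longrightarrow> f i = Some j \<Longrightarrow> A $$ (i,j) > 0"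
    using f by (auto simp: goodf_def)
  have fc: "f c = None" using PiE_props0(1)[OF fPi c] .
  have rng: "\<And>i j. i < N \<Longrightarrow> f i = Some j \<Longrightarrow> j < N \<and> j \<noteq> i"
    using PiE_props0(2)[OF fPi c] by blast
  have up: "uniqpar ?R" by (auto simp: uniqpar_def relf_def)
  have Rin: "\<And>j i. (j,i) \<in> ?R \<Longrightarrow> j < N \<and> i < N" using rng by (auto simp: relf_def)
  have np: "\<And>x. x < N \<Longrightarrow> nopar ?R x \<longleftrightarrow> f x = None" by (auto simp: nopar_def relf_def)
  define rt where "rt x = (THE r. (r,x) \<in> ?R\<^sup>* \<and> nopar ?R r)" for x
  have rt: "(rt x, x) \<in> ?R\<^sup>* \<and> nopar ?R (rt x)" for x
  proof -
    obtain r where r: "(r,x) \<in> ?R\<^sup>*" "nopar ?R r" using exists_root[OF relf_finite ac] by blast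
    show ?thesis unfolding rt_def
      by (rule theI[of _ r]) (use r uniq_root[OF up] in blast)+
  qed
  have rt_eq: "rt x = r" if "(r,x) \<in> ?R\<^sup>*" "nopar ?R r" for x r
    using uniq_root[OF up that] rt[of x] by auto
  have anc: "a < N" if "(a,b) \<in> ?R\<^sup>*" "b < N" for a b
    using that(1) by (rule converse_rtranclE) (use that(2) Rin in auto)
  have rtN: "x < N \<Longrightarrow> rt x < N" for x using anc rt by blast
  have rt_arc: "rt j = rt i" if "(j,i) \<in> ?R" for j i
  proof -
    have "(rt j, i) \<in> ?R\<^sup>*" using rt[of j] that by (meson rtrancl.rtrancl_into_rtrancl)
    then show ?thesis using rt_eq rt by metis
  qed
  have rt_rtrancl: "(a,b) \<in> ?R\<^sup>* \<Longrightarrow> rt a = rt b" for a b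
    by (induction rule: rtrancl_induct) (auto dest: rt_arc)
  define cls where "cls y = {x\<in>{0..<N}. rt x = rt y}" for y
  define P where "P = cls ` {0..<N}"
  have chain: "(a,b) \<in> ?R\<^sup>* \<Longrightarrow> b < N \<Longrightarrow> (a,b) \<in> (?R \<inter> cls b \<times> cls b)\<^sup>*" for a b
  proof (induction rule: rtrancl_induct)
    case base then show ?case by simp
  next
    case (step y z)
    have y: "y < N" using Rin step(2) by auto
    have e: "cls y = cls z" using rt_arc[OF step(2)] by (simp add: cls_def)
    have yz: "(y,z) \<in> ?R \<inter> cls z \<times> cls z" using step(2) y step(4) rt_arc[OF step(2)] by (auto simp: cls_def)
    have "(a,y) \<in> (?R \<inter> cls z \<times> cls z)\<^sup>*" using step(3)[OF y] e by simp
    then show ?case using yz by (rule rtrancl.rtrancl_into_rtrancl)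
  qed
  have tree: "diverging_tree (?R \<inter> cls y \<times> cls y) (cls y) (rt y)" if y: "y < N" for y
    unfolding diverging_tree_def
  proof (intro conjI ballI)
    have "rt (rt y) = rt y" using rt_eq[OF rtrancl_refl] rt by blast
    then show "rt y \<in> cls y" using rtN[OF y] by (simp add: cls_def)
    show "?R \<inter> cls y \<times> cls y \<subseteq> cls y \<times> cls y" by auto
  next
    fix v assume v: "v \<in> cls y"
    then have vN: "v < N" and rv: "rt v = rt y" by (auto simp: cls_def)
    show "card {u. (u,v) \<in> ?R \<inter> cls y \<times> cls y} = (if v = rt y then 0 else 1)"
    proof (cases "f v")
      case None
      then have "nopar ?R v" using np[OF vN] by simp
      then have "rt v = v" using rt_eq[OF rtrancl_refl] by blast
      then have "v = rt y" using rv by simp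
      moreover have E: "{u. (u,v) \<in> ?R \<inter> cls y \<times> cls y} = {}" using None by (auto simp: relf_def)
      ultimately show ?thesis unfolding E by simp
    next
      case (Some u)
      have uv: "(u,v) \<in> ?R" using Some vN by (auto simp: relf_def)
      have "v \<noteq> rt y" using rt[of y] uv by (auto simp: nopar_def)
      moreover have E: "{u. (u,v) \<in> ?R \<inter> cls y \<times> cls y} = {u}"
        using Some v uv rt_arc[OF uv] Rin[OF uv] by (auto simp: relf_def cls_def)
      ultimately show ?thesis unfolding E by simp
    qed
    show "(rt y, v) \<in> (?R \<inter> cls y \<times> cls y)\<^sup>*"
    proof -
      have "cls v = cls y" using rv by (simp add: cls_def)
      then show ?thesis using chain[OF rt[of v, THEN conjunct1] vN] rv by simp
    qed
  qed
  have fwp: "forest_with_parts A ?R P"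
    unfolding forest_with_parts_def
  proof (intro conjI ballI)
    show "?R \<subseteq> arcs A"
      using Ac Rin pos by (auto simp: arcs_def relf_def)
    have dr: "dim_row A = N" using Ac by simp
    show "partition_on {0..<dim_row A} P"
      unfolding dr partition_on_def disjoint_def P_def
    proof (intro conjI ballI impI)
      show "\<Union> (cls ` {0..<N}) = {0..<N}" by (auto simp: cls_def)
      show "{} \<notin> cls ` {0..<N}" by (auto simp: cls_def)
    next
      fix a b assume "a \<in> cls ` {0..<N}" "b \<in> cls ` {0..<N}" "a \<noteq> b"
      then show "a \<inter> b = {}" by (auto simp: cls_def)
    qed
    show "?R \<subseteq> (\<Union>S\<in>P. S \<times> S)"
    proof
      fix e assume e: "e \<in> ?R"
      obtain j i where ji: "e = (j,i)" by (cases e)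
      have "(j,i) \<in> cls i \<times> cls i" using e ji Rin rt_arc by (auto simp: cls_def)
      then show "e \<in> (\<Union>S\<in>P. S \<times> S)" using ji Rin e by (auto simp: P_def)
    qed
  next
    fix S assume "S \<in> P"
    then obtain y where "y < N" "S = cls y" by (auto simp: P_def)
    then show "\<exists>r. diverging_tree (?R \<inter> S \<times> S) S r" using tree by blast
  qed
  have rtc: "rt c = c" using rt_eq[OF rtrancl_refl] fc np[OF c] by blast
  have rto: "rt ob = c" using rt_eq[OF co] fc np[OF c] by blast
  show ?thesis unfolding forests_root_def
  proof (intro CollectI conjI exI)
    show "card ?R = k" by (rule ck)
    show "forest_with_parts A ?R P" by (rule fwp)
    show "\<exists>S\<in>P. c \<in> S \<and> ob \<in> S \<and> diverging_tree (?R \<inter> S \<times> S) S c"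
    proof (intro bexI conjI)
      show "cls c \<in> P" using c by (simp add: P_def)
      show "c \<in> cls c" "ob \<in> cls c" using c o rtc rto by (auto simp: cls_def)
      show "diverging_tree (?R \<inter> cls c \<times> cls c) (cls c) c" using tree[OF c] rtc by simp
    qed
  qed
qed

lemma comb_sup:
  assumes Ac: "A \<in> carrier_mat N N"
    and diag: "\<And>i. i < N \<Longrightarrow> A $$ (i,i) = 0"
    and c: "c < N" and o: "ob < N"
    and F: "F \<in> forests_root A k c ob"
  shows "F \<in> relf N ` goodf A N c ob k"
proof -
  obtain P S0 where ck: "card F = k" and fwp: "forest_with_parts A F P" and S0: "S0 \<in> P"
    and cS0: "c \<in> S0" and oS0: "ob \<in> S0" and t0: "diverging_tree (F \<inter> S0 \<times> S0) S0 c"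
    using F by (auto simp: forests_root_def)
  have arcs: "F \<subseteq> arcs A" and part: "partition_on {0..<N} P" and inparts: "F \<subseteq> (\<Union>S\<in>P. S \<times> S)"
    and trees: "\<And>S. S \<in> P \<Longrightarrow> \<exists>r. diverging_tree (F \<inter> S \<times> S) S r"
    using fwp Ac by (auto simp: forest_with_parts_def)
  have Fin: "\<And>u v. (u,v) \<in> F \<Longrightarrow> u < N \<and> v < N \<and> A $$ (v,u) > 0"
    using arcs Ac by (auto simp: arcs_def)
  have Pcov: "\<And>v. v < N \<Longrightarrow> \<exists>S\<in>P. v \<in> S" using partition_onD1[OF part] by auto
  have Psub: "\<And>S. S \<in> P \<Longrightarrow> S \<subseteq> {0..<N}" using partition_onD1[OF part] by auto
  have Pdisj: "\<And>S S' v. S \<in> P \<Longrightarrow> S' \<in> P \<Longrightarrow> v \<in> S \<Longrightarrow> v \<in> S' \<Longrightarrow> S = S'"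
    using partition_onD2[OF part] unfolding disjoint_def by blast
  have K: "(u,v) \<in> F \<inter> S \<times> S" if uv: "(u,v) \<in> F" and SP: "S \<in> P" and vS: "v \<in> S" for u v S
  proof -
    obtain S' where "S' \<in> P" "(u,v) \<in> S' \<times> S'" using inparts uv by blast
    then show ?thesis using Pdisj[OF SP \<open>S' \<in> P\<close> vS] uv by auto
  qed
  have indeg: "{u. (u,v) \<in> F} = {u. (u,v) \<in> F \<inter> S \<times> S}" if "S \<in> P" "v \<in> S" for v S
    using K[OF _ that] by auto
  have finin: "finite {u. (u,v) \<in> F \<inter> S \<times> S}" if "S \<in> P" for v S
    using Psub[OF that] by (auto intro: finite_subset[of _ "{0..<N}"])
  have root_np: "\<And>u. (u,r) \<notin> F" if "S \<in> P" "diverging_tree (F \<inter> S \<times> S) S r" for S r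
  proof -
    have rS: "r \<in> S" and c0: "card {u. (u,r) \<in> F \<inter> S \<times> S} = 0"
      using that(2) unfolding diverging_tree_def by auto
    have "{u. (u,r) \<in> F \<inter> S \<times> S} = {}" using card_0_eq[OF finin[OF that(1)]] c0 by blast
    then show "\<And>u. (u,r) \<notin> F" using indeg[OF that(1) rS] by auto
  qed
  have up: "uniqpar F" unfolding uniqpar_def
  proof (intro allI impI)
    fix u u' v assume uv: "(u,v) \<in> F" and uv': "(u',v) \<in> F"
    obtain S where S: "S \<in> P" "v \<in> S" using Pcov Fin[OF uv] by blast
    obtain r where t: "diverging_tree (F \<inter> S \<times> S) S r" using trees[OF S(1)] by blast
    have "card {u. (u,v) \<in> F \<inter> S \<times> S} \<le> 1" using t S(2) unfolding diverging_tree_def by auto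
    then have "\<forall>a\<in>{u. (u,v) \<in> F \<inter> S \<times> S}. \<forall>b\<in>{u. (u,v) \<in> F \<inter> S \<times> S}. a = b"
      using card_le_Suc0_iff_eq[OF finin[OF S(1)]] by simp
    then show "u = u'" using K[OF uv S] K[OF uv' S] by blast
  qed
  define f where "f i = (if i < N then (if \<exists>u. (u,i) \<in> F then Some (THE u. (u,i) \<in> F) else None) else undefined)" for i
  have fSome: "f i = Some j \<longleftrightarrow> (j,i) \<in> F" if "i < N" for i j
  proof
    assume "f i = Some j"
    then have ex: "\<exists>u. (u,i) \<in> F" and j: "j = (THE u. (u,i) \<in> F)" using that by (auto simp: f_def split: if_splits)
    then show "(j,i) \<in> F" using theI'[of "\<lambda>u. (u,i) \<in> F"] up unfolding uniqpar_def by blast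
  next
    assume ji: "(j,i) \<in> F"
    have "(THE u. (u,i) \<in> F) = j" by (rule the_equality) (use ji up in \<open>auto simp: uniqpar_def\<close>)
    then show "f i = Some j" using ji that by (auto simp: f_def)
  qed
  have relF: "relf N f = F"
  proof
    show "relf N f \<subseteq> F" using fSome by (auto simp: relf_def)
    show "F \<subseteq> relf N f" using fSome Fin by (auto simp: relf_def)
  qed
  have cnp: "\<And>u. (u,c) \<notin> F" using root_np[OF S0 t0] .
  have fPi: "f \<in> PiE {0..<N} (Xs N c)"
  proof (rule PiE_I)
    fix i assume i: "i \<in> {0..<N}"
    show "f i \<in> Xs N c i"
    proof (cases "f i")
      case None then show ?thesis by (simp add: Xs_def)
    next
      case (Some j)
      then have ji: "(j,i) \<in> F" using fSome i by auto
      then have "i \<noteq> c" using cnp by auto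
      moreover have "j \<noteq> i" using Fin[OF ji] diag by auto
      ultimately show ?thesis using Some Fin[OF ji] by (auto simp: Xs_def)
    qed
  next
    fix i assume "i \<notin> {0..<N}" then show "f i = undefined" by (simp add: f_def)
  qed
  have ac: "acyclic F"
    unfolding acyclic_def
  proof
    fix x
    show "(x,x) \<notin> F\<^sup>+"
    proof
      assume xx: "(x,x) \<in> F\<^sup>+"
      then obtain z where "(z,x) \<in> F" by (meson tranclD2)
      then have xN: "x < N" using Fin by auto
      obtain S where S: "S \<in> P" "x \<in> S" using Pcov[OF xN] by blast
      obtain r where t: "diverging_tree (F \<inter> S \<times> S) S r" using trees[OF S(1)] by blast
      have rx: "(r,x) \<in> F\<^sup>*"
        using t S(2) rtrancl_mono[of "F \<inter> S \<times> S" F] unfolding diverging_tree_def by blast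
      have rnp: "\<And>u. (u,r) \<notin> F" using root_np[OF S(1) t] .
      have "(u,u) \<notin> F\<^sup>+" if "(r,u) \<in> F\<^sup>*" for u
        using that
      proof (induction rule: rtrancl_induct)
        case base
        show ?case using rnp by (meson tranclD2)
      next
        case (step y u)
        show ?case
        proof
          assume "(u,u) \<in> F\<^sup>+"
          then obtain z where z: "(u,z) \<in> F\<^sup>*" "(z,u) \<in> F" by (meson tranclD2)
          have "z = y" using up z(2) step(2) by (auto simp: uniqpar_def)
          then have "(y,y) \<in> F\<^sup>+" using step(2) z(1) by (meson rtrancl_into_trancl2)
          then show False using step(3) by simp
        qed
      qed
      then show False using rx xx by blast
    qed
  qed
  have co: "(c,ob) \<in> F\<^sup>*"
    using t0 oS0 rtrancl_mono[of "F \<inter> S0 \<times> S0" F] unfolding diverging_tree_def by blast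
  have pos: "\<forall>i<N. \<forall>j. f i = Some j \<longrightarrow> A $$ (i,j) > 0" using fSome Fin by blast
  have "f \<in> goodf A N c ob k" unfolding goodf_def using fPi relF ck ac co pos by simp
  then show ?thesis using relF by (metis image_eqI)
qed

lemma comb:
  assumes "A \<in> carrier_mat N N"
    and "\<And>i. i < N \<Longrightarrow> A $$ (i,i) = 0"
    and "c < N" and "ob < N"
  shows "relf N ` goodf A N c ob k = forests_root A k c ob"
  using comb_sub[OF assms(1,3,4)] comb_sup[OF assms] by blast

lemma PiE_props:
  assumes "f \<in> PiE {0..<N} (Xs N c)" "c < N"
  shows "f c = None" "\<And>i j. i < N \<Longrightarrow> f i = Some j \<Longrightarrow> j < N \<and> j \<noteq> i"
  using assms by (auto simp: PiE_def Pi_def Xs_def split: if_splits)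

lemma relf_inj: "inj_on (relf N) (PiE {0..<N} X)"
proof (rule inj_onI)
  fix f g assume f: "f \<in> PiE {0..<N} X" and g: "g \<in> PiE {0..<N} X" and e: "relf N f = relf N g"
  show "f = g"
  proof (rule PiE_ext[OF f g])
    fix i assume i: "i \<in> {0..<N}"
    show "f i = g i"
    proof (cases "f i")
      case None
      show ?thesis
      proof (cases "g i")
        case (Some j) then have "(j,i) \<in> relf N g" using i by (auto simp: relf_def)
        then have "(j,i) \<in> relf N f" using e by simp
        then show ?thesis using None by (simp add: relf_def)
      qed (simp add: None)
    next
      case (Some j) then have "(j,i) \<in> relf N f" using i by (auto simp: relf_def)
      then have "(j,i) \<in> relf N g" using e by simp
      then show ?thesis using Some by (simp add: relf_def)
    qed
  qed
qed

lemma relf_img: "relf N f = (\<lambda>i. (the (f i), i)) ` {i\<in>{0..<N}. f i \<noteq> None}"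
  by (auto simp: relf_def image_def)

lemma relf_card: "card (relf N f) = card {i\<in>{0..<N}. f i \<noteq> None}"
  unfolding relf_img by (rule card_image) (auto intro: inj_onI)

lemma weight_eq: "(\<Prod>i=0..<N. wr A i (f i)) = forest_weight A (relf N f)"
proof -
  have "(\<Prod>i=0..<N. wr A i (f i)) = (\<Prod>i\<in>{i\<in>{0..<N}. f i \<noteq> None}. wr A i (f i))"
    by (rule prod.mono_neutral_right) (auto simp: wr_def)
  also have "\<dots> = (\<Prod>i\<in>{i\<in>{0..<N}. f i \<noteq> None}. A $$ (i, the (f i)))"
    by (rule prod.cong) (auto simp: wr_def)
  also have "\<dots> = forest_weight A (relf N f)"
    unfolding forest_weight_def relf_img by (subst prod.reindex) (auto intro: inj_onI)
  finally show ?thesis .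
qed

theorem lemma2:
  fixes A :: "real mat" and N c ob :: nat
  assumes "A \<in> carrier_mat N N"
    and "\<And>i j. i < N \<Longrightarrow> j < N \<Longrightarrow> A $$ (i,j) \<ge> 0"
    and "\<And>i. i < N \<Longrightarrow> A $$ (i,i) = 0"
    and "c < N" and "ob < N"
  shows "\<forall>i < N. coeff (adj_mat (sI_plus (laplacian A)) $$ (ob, c)) i
           = theta A (forests_root A (N - i - 1) c ob)"
proof (intro allI impI)
  fix n assume n: "n < N"
  note Ac = assms(1) and nonneg = assms(2) and diag = assms(3) and c = assms(4) and o = assms(5)
  let ?L = "laplacian A"
  let ?M = "sI_plus ?L"
  let ?PI = "PiE {0..<N} (Xs N c)"
  have Lc: "?L \<in> carrier_mat N N" using Ac by (auto simp: laplacian_def degree_mat_def)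
  have Mc: "?M \<in> carrier_mat N N" using Lc by (auto simp: sI_plus_def)
  have Ment: "?M $$ (i,k) = (if i = k then [:0,1:] else 0) +
      [:(if i = k then (\<Sum>j<N. A $$ (i,j)) else 0) - A $$ (i,k):]" if "i < N" "k < N" for i k
    using that Ac Lc by (auto simp: sI_plus_def laplacian_def degree_mat_def)
  have h1: "adj_mat ?M $$ (ob, c) = cofactor ?M c ob"
    using Mc c o by (simp add: adj_mat_def)
  define M' where "M' = mat N N (\<lambda>(i,k). if i = c then (if k = ob then 1 else 0) else ?M $$ (i,k))"
  have M'c: "M' \<in> carrier_mat N N" by (simp add: M'_def)
  have h2: "cofactor ?M c ob = det M'" unfolding M'_def by (rule cofactor_replace[OF Mc c o])
  have ent: "M' $$ (i,k) = (\<Sum>x\<in>Xs N c i. monom (wr A i x) (wd c i x) * [:Vr c ob i x k:])"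
    if i: "i < N" and k: "k < N" for i k
  proof (cases "i = c")
    case True
    then show ?thesis using i k by (simp add: M'_def Xs_def wr_def wd_def Vr_def monom_0 one_pCons)
  next
    case False
    let ?S = "{0..<N} - {i}"
    have "(\<Sum>x\<in>Xs N c i. monom (wr A i x) (wd c i x) * [:Vr c ob i x k:]) =
        monom 1 1 * [:(if i = k then 1 else 0):] + (\<Sum>x\<in>Some ` ?S. monom (wr A i x) (wd c i x) * [:Vr c ob i x k:])"
      using False by (simp add: Xs_def wr_def wd_def Vr_def)
    also have "(\<Sum>x\<in>Some ` ?S. monom (wr A i x) (wd c i x) * [:Vr c ob i x k:]) =
        (\<Sum>j\<in>?S. [:A $$ (i,j) * ((if i = k then 1 else 0) - (if j = k then 1 else 0)):])"
      using False by (subst sum.reindex) (auto simp: wr_def wd_def Vr_def monom_0 mult.commute intro!: sum.cong)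
    also have "\<dots> = [:\<Sum>j\<in>?S. A $$ (i,j) * ((if i = k then 1 else 0) - (if j = k then 1 else 0)):]"
      by (simp only: monom_sum[of _ _ 0, unfolded monom_0])
    also have "(\<Sum>j\<in>?S. A $$ (i,j) * ((if i = k then 1 else 0) - (if j = k then 1 else 0))) =
        (if i = k then (\<Sum>j<N. A $$ (i,j)) else 0) - A $$ (i,k)"
    proof (cases "i = k")
      case True
      have "(\<Sum>j\<in>?S. A $$ (i,j) * ((if i = k then 1 else 0) - (if j = k then 1 else 0))) = (\<Sum>j\<in>?S. A $$ (i,j))"
        using True by (intro sum.cong) auto
      also have "\<dots> = (\<Sum>j<N. A $$ (i,j))"
        using diag[OF i] i by (subst sum.mono_neutral_left[of "{0..<N}"]) (auto simp: lessThan_atLeast0)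
      finally show ?thesis using True diag[OF i] by simp
    next
      case False
      have "(\<Sum>j\<in>?S. A $$ (i,j) * ((if i = k then 1 else 0) - (if j = k then 1 else 0))) =
          (\<Sum>j\<in>?S. if j = k then - A $$ (i,j) else 0)"
        using False by (intro sum.cong) auto
      also have "\<dots> = - A $$ (i,k)" using False k by simp
      finally show ?thesis using False by simp
    qed
    finally show ?thesis using False i k
      by (simp add: M'_def Ment monom_Suc monom_0)
  qed
  have finX: "\<And>i. i < N \<Longrightarrow> finite (Xs N c i)" by (simp add: Xs_def)
  have h3: "det M' = (\<Sum>f\<in>?PI. (\<Prod>i=0..<N. monom (wr A i (f i)) (wd c i (f i))) *
       det (mat N N (\<lambda>(i,k). [:Vr c ob i (f i) k:])))"
    by (rule det_multilin[OF M'c finX ent])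
  define W :: "(nat \<Rightarrow> nat option) \<Rightarrow> real" where "W f = (\<Prod>i=0..<N. wr A i (f i))" for f
  define dd :: "(nat \<Rightarrow> nat option) \<Rightarrow> nat" where "dd f = card {i\<in>{0..<N}. i \<noteq> c \<and> f i = None}" for f
  define D :: "(nat \<Rightarrow> nat option) \<Rightarrow> real" where "D f = (if acyclic (relf N f) \<and> (c,ob) \<in> (relf N f)\<^sup>* then 1 else (0::real))" for f
  have trm: "(\<Prod>i=0..<N. monom (wr A i (f i)) (wd c i (f i))) * det (mat N N (\<lambda>(i,k). [:Vr c ob i (f i) k:]))
      = monom (W f * D f) (dd f)" if f: "f \<in> ?PI" for f
  proof -
    have "(\<Prod>i=0..<N. monom (wr A i (f i)) (wd c i (f i))) = monom (W f) (\<Sum>i=0..<N. wd c i (f i))"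
      by (simp add: prod_monom W_def)
    also have "(\<Sum>i=0..<N. wd c i (f i)) = dd f"
      unfolding dd_def wd_def by (simp add: sum.If_cases Int_def conj_commute)
    finally have 1: "(\<Prod>i=0..<N. monom (wr A i (f i)) (wd c i (f i))) = monom (W f) (dd f)" .
    have "mat N N (\<lambda>(i,k). [:Vr c ob i (f i) k:]) = map_mat (\<lambda>x. [:x:]) (Em N c f ob)"
      by (rule eq_matI) (simp_all add: Em_def Vr_def)
    then have "det (mat N N (\<lambda>(i,k). [:Vr c ob i (f i) k:])) = [:det (Em N c f ob):]"
      using comm_ring_hom.hom_det[OF cp_hom, of "Em N c f ob"] by simp
    also have "det (Em N c f ob) = D f"
    proof -
      have r: "\<And>i j. i < N \<Longrightarrow> f i = Some j \<Longrightarrow> j < N" using PiE_props(2)[OF f c] by blast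
      show ?thesis using Em_val[of c N f ob, OF c PiE_props(1)[OF f c] r o] by (simp add: D_def)
    qed
    finally show ?thesis using 1 by (simp add: monom_0[symmetric] mult_monom)
  qed
  have h4: "coeff (adj_mat ?M $$ (ob, c)) n = (\<Sum>f\<in>?PI. if dd f = n then W f * D f else 0)"
    unfolding h1 h2 h3 by (simp add: trm coeff_sum cong: sum.cong)
  have ddk: "dd f = n \<longleftrightarrow> card (relf N f) = N - n - 1" if f: "f \<in> ?PI" for f
  proof -
    have "{i\<in>{0..<N}. i \<noteq> c \<and> f i = None} \<union> {i\<in>{0..<N}. f i \<noteq> None} = {0..<N} - {c}"
      using PiE_props(1)[OF f c] by auto
    moreover have "card ({i\<in>{0..<N}. i \<noteq> c \<and> f i = None} \<union> {i\<in>{0..<N}. f i \<noteq> None}) =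
        dd f + card {i\<in>{0..<N}. f i \<noteq> None}"
      unfolding dd_def by (rule card_Un_disjoint) auto
    moreover have "card ({0..<N} - {c}) = N - 1" using c by simp
    ultimately have "dd f + card (relf N f) = N - 1"
      unfolding relf_card by simp
    then show ?thesis using n by auto
  qed
  let ?k = "N - n - 1"
  have "(\<Sum>f\<in>?PI. if dd f = n then W f * D f else 0) = (\<Sum>f\<in>goodf A N c ob ?k. W f)"
  proof -
    have "(\<Sum>f\<in>?PI. if dd f = n then W f * D f else 0) =
        (\<Sum>f\<in>?PI. if f \<in> goodf A N c ob ?k then W f else 0)"
    proof (rule sum.cong[OF refl])
      fix f assume f: "f \<in> ?PI"
      show "(if dd f = n then W f * D f else 0) = (if f \<in> goodf A N c ob ?k then W f else 0)"
      proof (cases "dd f = n \<and> D f = 1 \<and> \<not> (\<forall>i<N. \<forall>j. f i = Some j \<longrightarrow> A $$ (i,j) > 0)")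
        case True
        then obtain i j where ij: "i < N" "f i = Some j" "\<not> A $$ (i,j) > 0" by auto
        have j: "j < N" using PiE_props(2)[OF f c ij(1,2)] by auto
        have "A $$ (i,j) = 0" using nonneg[OF ij(1) j] ij(3) by auto
        then have "W f = 0" unfolding W_def using ij
          by (intro prod_zero bexI[of _ i]) (auto simp: wr_def)
        then show ?thesis by simp
      next
        case False
        then show ?thesis using f ddk[OF f] by (auto simp: goodf_def D_def)
      qed
    qed
    also have "\<dots> = (\<Sum>f\<in>goodf A N c ob ?k. W f)"
    proof -
      have finPI: "finite ?PI" by (rule finite_PiE) (auto simp: Xs_def)
      have "goodf A N c ob ?k \<subseteq> ?PI" by (auto simp: goodf_def)
      then show ?thesis using finPI by (simp add: sum.If_cases Int_absorb1)
    qed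
    finally show ?thesis .
  qed
  also have "\<dots> = (\<Sum>F\<in>relf N ` goodf A N c ob ?k. forest_weight A F)"
    by (subst sum.reindex) (auto intro: inj_on_subset[OF relf_inj] simp: goodf_def W_def weight_eq)
  also have "\<dots> = theta A (forests_root A ?k c ob)"
    using comb[OF Ac diag c o, of ?k] by (simp add: theta_def)
  finally show "coeff (adj_mat ?M $$ (ob, c)) n = theta A (forests_root A (N - n - 1) c ob)"
    using h4 by simp
qed

end
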